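(* Let $\mathcal G$ be a finite connected groupoid and $\alpha=(S_g,\alpha_g)_{g\in\mathcal G}$ a unital group-type partial action of $\mathcal G$ on a commutative ring $S=\bigoplus_{y\in\mathcal G_0}S_y$, with $S_g=S1_g$ and $1_g\neq0$ for all $g$. Let $\mathcal H\in\mathrm{wSub}_\alpha(\mathcal G)$, with connected components $\mathcal H_1,\dots,\mathcal H_r$ having object sets $Y_1,\dots,Y_r$, and choose $y_j\in Y_j$. Let $T=S^{\alpha_{\mathcal H}}$, $R=S^{\alpha_{\mathcal G}}$, $T_{y_j}=S_{y_j}^{\alpha_{\mathcal H_j(y_j)}}$ and $R_{y_j}=S_{y_j}^{\alpha_{\mathcal G(y_j)}}$. Then $R\subseteq T$ is separable if and only if $R_{y_j}\subseteq T_{y_j}$ is separable for all $1\le j\le r$.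
   Context: A groupoid is a small category with all morphisms invertible; $\mathcal G_0$ is its object set (identified with identity morphisms), $s(g),t(g)$ source and target, $\mathcal G(x,y)=\{g:s(g)=x,t(g)=y\}$, $\mathcal G(x)=\mathcal G(x,x)$; $gh$ defined iff $s(g)=t(h)$; connected means all $\mathcal G(x,y)\ne\emptyset$; connected components are full subgroupoids on classes of $x\sim y\iff\mathcal G(x,y)\ne\emptyset$; wide means containing all objects. A partial action $\alpha=(S_g,\alpha_g)_{g\in\mathcal G}$ on a ring $S$: for each $g$, $S_{t(g)}$ is an ideal of $S$, $S_g$ an ideal of $S_{t(g)}$, $\alpha_g:S_{g^{-1}}\to S_g$ a ring isomorphism; $\alpha_x=\mathrm{id}_{S_x}$; for composable $(g,h)$, $\alpha_h^{-1}(S_{g^{-1}}\cap S_h)\subseteq S_{(gh)^{-1}}$ and $\alpha_g\alpha_h(a)=\alpha_{gh}(a)$ there. Unital: $S_g=S1_g$, $1_g$ central idempotent. A partial action of a connected groupoid $\mathcal K$ on $A=\bigoplus_{y\in\mathcal K_0}A_y$ is group-type if there are $x\in\mathcal K_0$ and $\tau_y\in\mathcal K(x,y)$ ($\tau_x=x$) with $A_{\tau_y^{-1}}=A_x$, $A_{\tau_y}=A_y$ for all $y$; for non-connected $\mathcal K$ it is group-type if each restriction to a connected component $\mathcal K_Y$ (acting on $\bigoplus_{y\in Y}A_y$) is group-type. For a subgroupoid $\mathcal H$, $\alpha_{\mathcal H}=(S_h,\alpha_h)_{h\in\mathcal H}$ acts on $\bigoplus_{z\in\mathcal H_0}S_z$;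 $\mathrm{wSub}_\alpha(\mathcal G)$ is the set of wide subgroupoids $\mathcal H$ with $\alpha_{\mathcal H}$ group-type. For a subgroupoid $\mathcal K$ and subring $A\subseteq S$, $A^{\alpha_{\mathcal K}}=\{a\in A:\alpha_k(a1_{k^{-1}})=a1_k\ \forall k\in\mathcal K\}$. A unital ring extension $B\subseteq C$ is separable if the multiplication $C\otimes_BC\to C$ splits as a map of $C$-bimodules, equivalently there is $e\in C\otimes_BC$ with $ce=ec$ for all $c\in C$ and $m(e)=1_C$. *)

theory Defs
  imports Main
begin

text \<open>Objects are identified with identity morphisms: the objects are the sources s g.\<close>

definition groupoid ::
  "'g set \<Rightarrow> ('g \<Rightarrow> 'g) \<Rightarrow> ('g \<Rightarrow> 'g) \<Rightarrow> ('g \<Rightarrow> 'g \<Rightarrow> 'g) \<Rightarrow> ('g \<Rightarrow> 'g) \<Rightarrow> bool" where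
  "groupoid G s t m i \<longleftrightarrow>
     (\<forall>g\<in>G. s g \<in> G \<and> t g \<in> G \<and> i g \<in> G) \<and>
     (\<forall>g\<in>G. s (s g) = s g \<and> t (s g) = s g \<and> s (t g) = t g \<and> t (t g) = t g) \<and>
     (\<forall>g\<in>G. \<forall>h\<in>G. s g = t h \<longrightarrow> m g h \<in> G \<and> s (m g h) = s h \<and> t (m g h) = t g) \<and>
     (\<forall>g\<in>G. \<forall>h\<in>G. \<forall>k\<in>G. s g = t h \<and> s h = t k \<longrightarrow> m (m g h) k = m g (m h k)) \<and>
     (\<forall>g\<in>G. m g (s g) = g \<and> m (t g) g = g) \<and>
     (\<forall>g\<in>G. s (i g) = t g \<and> t (i g) = s g \<and> m g (i g) = t g \<and> m (i g) g = s g)"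

definition objs :: "'g set \<Rightarrow> ('g \<Rightarrow> 'g) \<Rightarrow> 'g set" where
  "objs G s = s ` G"

definition hom :: "'g set \<Rightarrow> ('g \<Rightarrow> 'g) \<Rightarrow> ('g \<Rightarrow> 'g) \<Rightarrow> 'g \<Rightarrow> 'g \<Rightarrow> 'g set" where
  "hom G s t x y = {g\<in>G. s g = x \<and> t g = y}"

definition connected_gpd :: "'g set \<Rightarrow> ('g \<Rightarrow> 'g) \<Rightarrow> ('g \<Rightarrow> 'g) \<Rightarrow> bool" where
  "connected_gpd G s t \<longleftrightarrow> (\<forall>x\<in>objs G s. \<forall>y\<in>objs G s. hom G s t x y \<noteq> {})"

definition subgroupoid ::
  "'g set \<Rightarrow> 'g set \<Rightarrow> ('g \<Rightarrow> 'g) \<Rightarrow> ('g \<Rightarrow> 'g) \<Rightarrow> ('g \<Rightarrow> 'g \<Rightarrow> 'g) \<Rightarrow> ('g \<Rightarrow> 'g) \<Rightarrow> bool" where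
  "subgroupoid H G s t m i \<longleftrightarrow> H \<subseteq> G \<and>
     (\<forall>h\<in>H. s h \<in> H \<and> t h \<in> H \<and> i h \<in> H) \<and>
     (\<forall>g\<in>H. \<forall>h\<in>H. s g = t h \<longrightarrow> m g h \<in> H)"

definition wide_subgroupoid ::
  "'g set \<Rightarrow> 'g set \<Rightarrow> ('g \<Rightarrow> 'g) \<Rightarrow> ('g \<Rightarrow> 'g) \<Rightarrow> ('g \<Rightarrow> 'g \<Rightarrow> 'g) \<Rightarrow> ('g \<Rightarrow> 'g) \<Rightarrow> bool" where
  "wide_subgroupoid H G s t m i \<longleftrightarrow> subgroupoid H G s t m i \<and> objs G s \<subseteq> H"

definition components :: "'g set \<Rightarrow> ('g \<Rightarrow> 'g) \<Rightarrow> ('g \<Rightarrow> 'g) \<Rightarrow> 'g set set" where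
  "components K s t = (\<lambda>x. {y \<in> objs K s. hom K s t x y \<noteq> {}}) ` objs K s"

definition full_sub :: "'g set \<Rightarrow> ('g \<Rightarrow> 'g) \<Rightarrow> ('g \<Rightarrow> 'g) \<Rightarrow> 'g set \<Rightarrow> 'g set" where
  "full_sub K s t Y = {k\<in>K. s k \<in> Y \<and> t k \<in> Y}"

definition Sd :: "('g \<Rightarrow> 'r::comm_ring_1) \<Rightarrow> 'g \<Rightarrow> 'r set" where
  "Sd e g = range (\<lambda>a. a * e g)"

text \<open>A unital partial action (S_g = S 1_g, alpha_g) of G on S = UNIV, where moreover
 S is the direct sum of the ideals S_y, y an object (orthogonal idempotents summing to 1).\<close>
definition unital_partial_action ::
  "'g set \<Rightarrow> ('g \<Rightarrow> 'g) \<Rightarrow> ('g \<Rightarrow> 'g) \<Rightarrow> ('g \<Rightarrow> 'g \<Rightarrow> 'g) \<Rightarrow> ('g \<Rightarrow> 'g)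
     \<Rightarrow> ('g \<Rightarrow> 'r::comm_ring_1) \<Rightarrow> ('g \<Rightarrow> 'r \<Rightarrow> 'r) \<Rightarrow> bool" where
  "unital_partial_action G s t m i e \<alpha> \<longleftrightarrow>
     (\<forall>g\<in>G. e g * e g = e g) \<and>
     (\<forall>g\<in>G. Sd e g \<subseteq> Sd e (t g)) \<and>
     (\<forall>g\<in>G. bij_betw (\<alpha> g) (Sd e (i g)) (Sd e g) \<and>
        (\<forall>a\<in>Sd e (i g). \<forall>b\<in>Sd e (i g).
            \<alpha> g (a + b) = \<alpha> g a + \<alpha> g b \<and> \<alpha> g (a * b) = \<alpha> g a * \<alpha> g b)) \<and>
     (\<forall>x\<in>objs G s. \<forall>a\<in>Sd e x. \<alpha> x a = a) \<and>
     (\<forall>g\<in>G. \<forall>h\<in>G. s g = t h \<longrightarrow>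
        (\<forall>a\<in>Sd e (i h). \<alpha> h a \<in> Sd e (i g) \<inter> Sd e h \<longrightarrow>
            a \<in> Sd e (i (m g h)) \<and> \<alpha> g (\<alpha> h a) = \<alpha> (m g h) a)) \<and>
     (\<forall>x\<in>objs G s. \<forall>y\<in>objs G s. x \<noteq> y \<longrightarrow> e x * e y = 0) \<and>
     (\<Sum>y\<in>objs G s. e y) = 1"

definition group_type_conn ::
  "'g set \<Rightarrow> ('g \<Rightarrow> 'g) \<Rightarrow> ('g \<Rightarrow> 'g) \<Rightarrow> ('g \<Rightarrow> 'g) \<Rightarrow> ('g \<Rightarrow> 'r::comm_ring_1) \<Rightarrow> bool" where
  "group_type_conn K s t i e \<longleftrightarrow>
     (\<exists>x\<in>objs K s. \<exists>\<tau>. \<tau> x = x \<and>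
        (\<forall>y\<in>objs K s. \<tau> y \<in> hom K s t x y \<and>
            Sd e (i (\<tau> y)) = Sd e x \<and> Sd e (\<tau> y) = Sd e y))"

definition group_type ::
  "'g set \<Rightarrow> ('g \<Rightarrow> 'g) \<Rightarrow> ('g \<Rightarrow> 'g) \<Rightarrow> ('g \<Rightarrow> 'g) \<Rightarrow> ('g \<Rightarrow> 'r::comm_ring_1) \<Rightarrow> bool" where
  "group_type K s t i e \<longleftrightarrow>
     (\<forall>Y\<in>components K s t. group_type_conn (full_sub K s t Y) s t i e)"

definition wSub ::
  "'g set \<Rightarrow> ('g \<Rightarrow> 'g) \<Rightarrow> ('g \<Rightarrow> 'g) \<Rightarrow> ('g \<Rightarrow> 'g \<Rightarrow> 'g) \<Rightarrow> ('g \<Rightarrow> 'g)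
     \<Rightarrow> ('g \<Rightarrow> 'r::comm_ring_1) \<Rightarrow> 'g set set" where
  "wSub G s t m i e = {H. wide_subgroupoid H G s t m i \<and> group_type H s t i e}"

definition invariants ::
  "'r set \<Rightarrow> 'g set \<Rightarrow> ('g \<Rightarrow> 'g) \<Rightarrow> ('g \<Rightarrow> 'r::comm_ring_1) \<Rightarrow> ('g \<Rightarrow> 'r \<Rightarrow> 'r) \<Rightarrow> 'r set" where
  "invariants A K i e \<alpha> = {a\<in>A. \<forall>k\<in>K. \<alpha> k (a * e (i k)) = a * e k}"

text \<open>Elements of the free abelian group on C x C are functions 'r x 'r => int (finitely
 supported). The subgroup N generated by the bilinearity and B-balancedness relations,
 so that the quotient is C \<otimes>_B C.\<close>
definition delta :: "'r \<times> 'r \<Rightarrow> 'r \<times> 'r \<Rightarrow> int" where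
  "delta p = (\<lambda>q. if q = p then 1 else 0)"

inductive_set tensor_rel :: "'r::comm_ring_1 set \<Rightarrow> 'r set \<Rightarrow> ('r \<times> 'r \<Rightarrow> int) set"
  for B C :: "'r set" where
  zero: "(\<lambda>_. 0) \<in> tensor_rel B C"
| add_l: "\<lbrakk>a \<in> C; a' \<in> C; b \<in> C\<rbrakk> \<Longrightarrow>
     (\<lambda>q. delta (a + a', b) q - delta (a, b) q - delta (a', b) q) \<in> tensor_rel B C"
| add_r: "\<lbrakk>a \<in> C; b \<in> C; b' \<in> C\<rbrakk> \<Longrightarrow>
     (\<lambda>q. delta (a, b + b') q - delta (a, b) q - delta (a, b') q) \<in> tensor_rel B C"
| bal: "\<lbrakk>a \<in> C; b \<in> C; r \<in> B\<rbrakk> \<Longrightarrow>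
     (\<lambda>q. delta (a * r, b) q - delta (a, r * b) q) \<in> tensor_rel B C"
| diff: "\<lbrakk>x \<in> tensor_rel B C; y \<in> tensor_rel B C\<rbrakk> \<Longrightarrow> (\<lambda>q. x q - y q) \<in> tensor_rel B C"

definition fsum :: "('r \<times> 'r) list \<Rightarrow> 'r \<times> 'r \<Rightarrow> int" where
  "fsum xs = (\<lambda>q. (\<Sum>p\<leftarrow>xs. delta p q))"

text \<open>B \<subseteq> C (with unit u of C) is separable iff there is e = sum of a_k \<otimes> b_k in
 C \<otimes>_B C with c e = e c for all c in C and m(e) = u.  (Every element of C \<otimes>_B C is
 a finite sum of simple tensors.)\<close>
definition separable :: "'r::comm_ring_1 set \<Rightarrow> 'r set \<Rightarrow> 'r \<Rightarrow> bool" where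
  "separable B C u \<longleftrightarrow>
     (\<exists>xs. set xs \<subseteq> C \<times> C \<and> (\<Sum>(a, b)\<leftarrow>xs. a * b) = u \<and>
        (\<forall>c\<in>C. (\<lambda>q. fsum (map (\<lambda>(a, b). (c * a, b)) xs) q
                    - fsum (map (\<lambda>(a, b). (a, b * c)) xs) q) \<in> tensor_rel B C))"

end

theory Submission
  imports Defs
begin


definition supp :: "('r \<times> 'r \<Rightarrow> int) \<Rightarrow> ('r \<times> 'r) set" where
  "supp x = {p. x p \<noteq> 0}"

definition push :: "('r \<Rightarrow> 'r) \<Rightarrow> ('r \<times> 'r) set \<Rightarrow> ('r \<times> 'r \<Rightarrow> int) \<Rightarrow> 'r \<times> 'r \<Rightarrow> int" where
  "push F A x = (\<lambda>q. \<Sum>p\<in>A. if (F (fst p), F (snd p)) = q then x p else 0)"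

lemma push_supp:
  assumes "finite A" "supp x \<subseteq> A"
  shows "push F A x = push F (supp x) x"
proof
  fix q
  show "push F A x q = push F (supp x) x q"
    unfolding push_def
    by (rule sum.mono_neutral_right[OF assms(1) assms(2)]) (auto simp: supp_def)
qed

lemma push_diff: "push F A (\<lambda>q. x q - y q) = (\<lambda>q. push F A x q - push F A y q)"
  unfolding push_def by (auto simp: sum_subtractf[symmetric] intro!: sum.cong)

lemma push_add: "push F A (\<lambda>q. x q + y q) = (\<lambda>q. push F A x q + push F A y q)"
  unfolding push_def by (auto simp: sum.distrib[symmetric] intro!: sum.cong)

lemma push_zero: "push F A (\<lambda>_. 0) = (\<lambda>_. 0)"
  unfolding push_def by auto

lemma push_delta:
  assumes "finite A" "p \<in> A"
  shows "push F A (delta p) = delta (F (fst p), F (snd p))"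
proof
  fix q
  have "push F A (delta p) q = (\<Sum>p'\<in>A. if p' = p then (if (F (fst p), F (snd p)) = q then 1 else 0) else 0)"
    unfolding push_def delta_def by (rule sum.cong) auto
  also have "\<dots> = (if (F (fst p), F (snd p)) = q then 1 else 0)"
    using assms by (simp add: sum.delta)
  finally show "push F A (delta p) q = delta (F (fst p), F (snd p)) q"
    unfolding delta_def by auto
qed

lemma supp_delta: "supp (delta p) = {p}"
  unfolding supp_def delta_def by auto

lemma rel_add:
  assumes "x \<in> tensor_rel B C" "y \<in> tensor_rel B C"
  shows "(\<lambda>q. x q + y q) \<in> tensor_rel B C"
proof -
  have "(\<lambda>q. 0 - y q) \<in> tensor_rel B C"
    using tensor_rel.diff[OF tensor_rel.zero assms(2)] by simp
  from tensor_rel.diff[OF assms(1) this] show ?thesis by simp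
qed

lemma push_rel:
  assumes FC: "\<forall>a\<in>C. F a \<in> C'"
    and Fadd: "\<forall>a\<in>C. \<forall>b\<in>C. F (a + b) = F a + F b"
    and Fbal: "\<forall>a\<in>C. \<forall>b\<in>C. \<forall>r\<in>B. \<exists>r'\<in>B'. F (a * r) = F a * r' \<and> F (r * b) = r' * F b"
  shows "x \<in> tensor_rel B C \<Longrightarrow> finite (supp x) \<and> push F (supp x) x \<in> tensor_rel B' C'"
proof (induction x rule: tensor_rel.induct)
  case zero
  then show ?case by (simp add: supp_def push_def tensor_rel.zero)
next
  case (add_l a a' b)
  let ?x = "\<lambda>q. delta (a + a', b) q - delta (a, b) q - delta (a', b) q"
  let ?A = "{(a + a', b), (a, b), (a', b)}"
  have s: "supp ?x \<subseteq> ?A" unfolding supp_def delta_def by auto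
  have fin: "finite (supp ?x)" by (rule finite_subset[OF s]) auto
  have "push F (supp ?x) ?x = push F ?A ?x" using push_supp[of ?A ?x F] s by simp
  also have "\<dots> = (\<lambda>q. delta (F a + F a', F b) q - delta (F a, F b) q - delta (F a', F b) q)"
    using add_l Fadd by (simp add: push_diff push_delta)
  finally show ?case using fin add_l FC by (simp add: tensor_rel.add_l)
next
  case (add_r a b b')
  let ?x = "\<lambda>q. delta (a, b + b') q - delta (a, b) q - delta (a, b') q"
  let ?A = "{(a, b + b'), (a, b), (a, b')}"
  have s: "supp ?x \<subseteq> ?A" unfolding supp_def delta_def by auto
  have fin: "finite (supp ?x)" by (rule finite_subset[OF s]) auto
  have "push F (supp ?x) ?x = push F ?A ?x" using push_supp[of ?A ?x F] s by simp
  also have "\<dots> = (\<lambda>q. delta (F a, F b + F b') q - delta (F a, F b) q - delta (F a, F b') q)"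
    using add_r Fadd by (simp add: push_diff push_delta)
  finally show ?case using fin add_r FC by (simp add: tensor_rel.add_r)
next
  case (bal a b r)
  let ?x = "\<lambda>q. delta (a * r, b) q - delta (a, r * b) q"
  let ?A = "{(a * r, b), (a, r * b)}"
  obtain r' where r': "r' \<in> B'" "F (a * r) = F a * r'" "F (r * b) = r' * F b"
    using Fbal bal by blast
  have s: "supp ?x \<subseteq> ?A" unfolding supp_def delta_def by auto
  have fin: "finite (supp ?x)" by (rule finite_subset[OF s]) auto
  have "push F (supp ?x) ?x = push F ?A ?x" using push_supp[of ?A ?x F] s by simp
  also have "\<dots> = (\<lambda>q. delta (F a * r', F b) q - delta (F a, r' * F b) q)"
    using r' by (simp add: push_diff push_delta)
  finally show ?case using fin bal FC r' by (simp add: tensor_rel.bal)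
next
  case (diff x y)
  let ?A = "supp x \<union> supp y"
  have s: "supp (\<lambda>q. x q - y q) \<subseteq> ?A" unfolding supp_def by auto
  have finA: "finite ?A" using diff by auto
  have fin: "finite (supp (\<lambda>q. x q - y q))" by (rule finite_subset[OF s finA])
  have "push F (supp (\<lambda>q. x q - y q)) (\<lambda>q. x q - y q) = push F ?A (\<lambda>q. x q - y q)"
    using push_supp[OF finA s] by simp
  also have "\<dots> = (\<lambda>q. push F (supp x) x q - push F (supp y) y q)"
    using push_supp[OF finA, of x F] push_supp[OF finA, of y F] by (simp add: push_diff)
  finally show ?case using fin diff by (simp add: tensor_rel.diff)
qed

lemma fsum_Nil: "fsum [] = (\<lambda>_. 0)" by (simp add: fsum_def)
lemma fsum_Cons: "fsum (p # xs) = (\<lambda>q. delta p q + fsum xs q)" by (simp add: fsum_def)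
lemma fsum_append: "fsum (xs @ ys) = (\<lambda>q. fsum xs q + fsum ys q)" by (simp add: fsum_def)

lemma supp_fsum: "supp (fsum xs) \<subseteq> set xs"
  by (induction xs) (auto simp: fsum_Nil fsum_Cons supp_def delta_def)

lemma push_fsum:
  assumes "finite A" "set xs \<subseteq> A"
  shows "push F A (fsum xs) = fsum (map (\<lambda>(a, b). (F a, F b)) xs)"
  using assms(2)
proof (induction xs)
  case Nil
  then show ?case by (simp add: fsum_Nil push_zero)
next
  case (Cons p xs)
  then show ?case using assms(1)
    by (cases p) (simp add: fsum_Cons push_add push_delta)
qed

definition sdiff :: "'r::comm_ring_1 \<Rightarrow> ('r \<times> 'r) list \<Rightarrow> 'r \<times> 'r \<Rightarrow> int" where
  "sdiff c xs = (\<lambda>q. fsum (map (\<lambda>(a, b). (c * a, b)) xs) q - fsum (map (\<lambda>(a, b). (a, b * c)) xs) q)"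

lemma separable_sdiff: "separable B C u \<longleftrightarrow>
   (\<exists>xs. set xs \<subseteq> C \<times> C \<and> (\<Sum>(a, b)\<leftarrow>xs. a * b) = u \<and> (\<forall>c\<in>C. sdiff c xs \<in> tensor_rel B C))"
  unfolding separable_def sdiff_def by simp

lemma sep_push:
  fixes F :: "'r::comm_ring_1 \<Rightarrow> 'r"
  assumes sep: "separable B C u"
    and FC: "\<forall>a\<in>C. F a \<in> C'"
    and Fadd: "\<forall>a\<in>C. \<forall>b\<in>C. F (a + b) = F a + F b"
    and Fmul: "\<forall>a\<in>C. \<forall>b\<in>C. F (a * b) = F a * F b"
    and F0: "F 0 = 0" and C0: "0 \<in> C"
    and Cadd: "\<forall>a\<in>C. \<forall>b\<in>C. a + b \<in> C"
    and Cmul: "\<forall>a\<in>C. \<forall>b\<in>C. a * b \<in> C"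
    and Fbal: "\<forall>a\<in>C. \<forall>b\<in>C. \<forall>r\<in>B. \<exists>r'\<in>B'. F (a * r) = F a * r' \<and> F (r * b) = r' * F b"
  shows "\<exists>ys. set ys \<subseteq> C' \<times> C' \<and> (\<Sum>(a, b)\<leftarrow>ys. a * b) = F u \<and>
     (\<forall>c\<in>C. \<forall>c'. (\<forall>a\<in>C. F (c * a) = c' * F a \<and> F (a * c) = F a * c') \<longrightarrow>
        sdiff c' ys \<in> tensor_rel B' C')"
proof -
  obtain xs where xs: "set xs \<subseteq> C \<times> C" "(\<Sum>(a, b)\<leftarrow>xs. a * b) = u"
    "\<forall>c\<in>C. sdiff c xs \<in> tensor_rel B C"
    using sep unfolding separable_sdiff by blast
  define ys where "ys = map (\<lambda>(a, b). (F a, F b)) xs"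
  have "set ys \<subseteq> C' \<times> C'" using xs(1) FC unfolding ys_def by auto
  moreover
  have "\<And>zs. set zs \<subseteq> C \<times> C \<Longrightarrow> (\<Sum>(a, b)\<leftarrow>zs. a * b) \<in> C \<and>
      F (\<Sum>(a, b)\<leftarrow>zs. a * b) = (\<Sum>(a, b)\<leftarrow>map (\<lambda>(a, b). (F a, F b)) zs. a * b)"
  proof -
    fix zs :: "('r \<times> 'r) list"
    show "set zs \<subseteq> C \<times> C \<Longrightarrow> (\<Sum>(a, b)\<leftarrow>zs. a * b) \<in> C \<and>
      F (\<Sum>(a, b)\<leftarrow>zs. a * b) = (\<Sum>(a, b)\<leftarrow>map (\<lambda>(a, b). (F a, F b)) zs. a * b)"
    proof (induction zs)
      case Nil
      then show ?case using F0 C0 by simp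
    next
      case (Cons p zs)
      then show ?case using Fadd Fmul Cadd Cmul by (cases p) auto
    qed
  qed
  hence "(\<Sum>(a, b)\<leftarrow>ys. a * b) = F u" using xs unfolding ys_def by auto
  moreover
  have "sdiff c' ys \<in> tensor_rel B' C'"
    if c: "c \<in> C" and hc: "\<forall>a\<in>C. F (c * a) = c' * F a \<and> F (a * c) = F a * c'" for c c'
  proof -
    let ?L1 = "map (\<lambda>(a, b). (c * a, b)) xs" and ?L2 = "map (\<lambda>(a, b). (a, b * c)) xs"
    let ?D = "sdiff c xs"
    let ?A = "set ?L1 \<union> set ?L2"
    have D: "?D \<in> tensor_rel B C" using xs c by blast
    have s0: "supp ?D \<subseteq> supp (fsum ?L1) \<union> supp (fsum ?L2)"
      unfolding sdiff_def supp_def by auto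
    have s: "supp ?D \<subseteq> ?A" using s0 supp_fsum[of ?L1] supp_fsum[of ?L2] by blast
    have finA: "finite ?A" by simp
    have "push F (supp ?D) ?D \<in> tensor_rel B' C'"
      using push_rel[OF FC Fadd Fbal D] by blast
    moreover have "push F (supp ?D) ?D = push F ?A ?D" using push_supp[OF finA s] by simp
    moreover have "push F ?A ?D = sdiff c' ys"
    proof -
      have "push F ?A ?D = (\<lambda>q. fsum (map (\<lambda>(a, b). (F a, F b)) ?L1) q -
                               fsum (map (\<lambda>(a, b). (F a, F b)) ?L2) q)"
        unfolding sdiff_def push_diff using push_fsum[OF finA, of ?L1 F] push_fsum[OF finA, of ?L2 F]
        by simp
      also have "map (\<lambda>(a, b). (F a, F b)) ?L1 = map (\<lambda>(a, b). (c' * a, b)) ys"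
        unfolding ys_def using xs(1) hc by (auto intro!: map_cong)
      also have "map (\<lambda>(a, b). (F a, F b)) ?L2 = map (\<lambda>(a, b). (a, b * c')) ys"
        unfolding ys_def using xs(1) hc by (auto intro!: map_cong)
      finally show ?thesis unfolding sdiff_def .
    qed
    ultimately show ?thesis by simp
  qed
  ultimately show ?thesis by blast
qed



locale upa =
  fixes G :: "'g set" and s t i :: "'g \<Rightarrow> 'g" and m :: "'g \<Rightarrow> 'g \<Rightarrow> 'g"
    and e :: "'g \<Rightarrow> 'r::comm_ring_1" and \<alpha> :: "'g \<Rightarrow> 'r \<Rightarrow> 'r"
  assumes grp: "groupoid G s t m i" and pa: "unital_partial_action G s t m i e \<alpha>"
    and finG: "finite G"
begin

lemma cl: "g \<in> G \<Longrightarrow> s g \<in> G" "g \<in> G \<Longrightarrow> t g \<in> G" "g \<in> G \<Longrightarrow> i g \<in> G"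
  using grp unfolding groupoid_def by auto

lemma st: "g \<in> G \<Longrightarrow> s (s g) = s g" "g \<in> G \<Longrightarrow> t (s g) = s g"
  "g \<in> G \<Longrightarrow> s (t g) = t g" "g \<in> G \<Longrightarrow> t (t g) = t g"
  using grp unfolding groupoid_def by auto

lemma mcl: "g \<in> G \<Longrightarrow> h \<in> G \<Longrightarrow> s g = t h \<Longrightarrow> m g h \<in> G"
  and mst: "g \<in> G \<Longrightarrow> h \<in> G \<Longrightarrow> s g = t h \<Longrightarrow> s (m g h) = s h"
  "g \<in> G \<Longrightarrow> h \<in> G \<Longrightarrow> s g = t h \<Longrightarrow> t (m g h) = t g"
  using grp unfolding groupoid_def by auto

lemma assoc: "g \<in> G \<Longrightarrow> h \<in> G \<Longrightarrow> k \<in> G \<Longrightarrow> s g = t h \<Longrightarrow> s h = t k \<Longrightarrow> m (m g h) k = m g (m h k)"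
  using grp unfolding groupoid_def by blast

lemma unit: "g \<in> G \<Longrightarrow> m g (s g) = g" "g \<in> G \<Longrightarrow> m (t g) g = g"
  using grp unfolding groupoid_def by auto

lemma inv: "g \<in> G \<Longrightarrow> s (i g) = t g" "g \<in> G \<Longrightarrow> t (i g) = s g"
  "g \<in> G \<Longrightarrow> m g (i g) = t g" "g \<in> G \<Longrightarrow> m (i g) g = s g"
  using grp unfolding groupoid_def by auto

lemma ii: assumes g: "g \<in> G" shows "i (i g) = g"
proof -
  have ig: "i g \<in> G" "i (i g) \<in> G" using cl g by auto
  have "i (i g) = m (i (i g)) (s (i (i g)))" using unit ig by simp
  also have "s (i (i g)) = s g" using inv ig g by simp
  also have "s g = m (i g) g" using inv g by simp
  also have "m (i (i g)) (m (i g) g) = m (m (i (i g)) (i g)) g"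
    using assoc[of "i (i g)" "i g" g] ig g inv by simp
  also have "m (i (i g)) (i g) = s (i g)" using inv ig by simp
  also have "m (s (i g)) g = g" using inv g unit by simp
  finally show ?thesis .
qed

lemma objs_iff: "x \<in> objs G s \<longleftrightarrow> x \<in> G \<and> s x = x"
  unfolding objs_def using cl st by (auto intro: image_eqI[where x=x])

lemma objs_t: "x \<in> objs G s \<Longrightarrow> t x = x"
  using objs_iff st by metis

lemma s_objs: "g \<in> G \<Longrightarrow> s g \<in> objs G s" and t_objs: "g \<in> G \<Longrightarrow> t g \<in> objs G s"
  using objs_iff cl st by auto

lemma i_obj: assumes "x \<in> objs G s" shows "i x = x"
proof -
  have x: "x \<in> G" "s x = x" "t x = x" using assms objs_iff objs_t by auto
  have "i x = m (t (i x)) (i x)" using unit cl x by simp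
  also have "t (i x) = x" using inv x by simp
  also have "m x (i x) = x" using inv x by simp
  finally show ?thesis .
qed

lemma finobjs: "finite (objs G s)" unfolding objs_def using finG by simp

lemma idem: "g \<in> G \<Longrightarrow> e g * e g = e g" using pa unfolding unital_partial_action_def by auto

lemma Sd_iff: "g \<in> G \<Longrightarrow> a \<in> Sd e g \<longleftrightarrow> a * e g = a"
  unfolding Sd_def using idem by (auto simp: mult.assoc intro: range_eqI[where x=a])

lemma Sd_t: "g \<in> G \<Longrightarrow> Sd e g \<subseteq> Sd e (t g)" using pa unfolding unital_partial_action_def by auto

lemma e_Sd: "g \<in> G \<Longrightarrow> e g \<in> Sd e g" using Sd_iff idem by simp

lemma e_t: "g \<in> G \<Longrightarrow> e g * e (t g) = e g"
  using Sd_t e_Sd Sd_iff cl by blast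

lemma Sd_mult: "g \<in> G \<Longrightarrow> a \<in> Sd e g \<Longrightarrow> a * b \<in> Sd e g" "g \<in> G \<Longrightarrow> a \<in> Sd e g \<Longrightarrow> b * a \<in> Sd e g"
  by (simp_all add: Sd_iff) (metis mult.assoc mult.commute)+

lemma Sd_add: "g \<in> G \<Longrightarrow> a \<in> Sd e g \<Longrightarrow> b \<in> Sd e g \<Longrightarrow> a + b \<in> Sd e g"
  using Sd_iff by (auto simp: distrib_right)

lemma Sd_0: "0 \<in> Sd e g" unfolding Sd_def by (auto intro: range_eqI[where x=0])

lemma bij: "g \<in> G \<Longrightarrow> bij_betw (\<alpha> g) (Sd e (i g)) (Sd e g)"
  using pa unfolding unital_partial_action_def by auto

lemma amap: "g \<in> G \<Longrightarrow> a \<in> Sd e (i g) \<Longrightarrow> \<alpha> g a \<in> Sd e g"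
  using bij bij_betw_apply by metis

lemma aadd: "g \<in> G \<Longrightarrow> a \<in> Sd e (i g) \<Longrightarrow> b \<in> Sd e (i g) \<Longrightarrow> \<alpha> g (a + b) = \<alpha> g a + \<alpha> g b"
  and amul: "g \<in> G \<Longrightarrow> a \<in> Sd e (i g) \<Longrightarrow> b \<in> Sd e (i g) \<Longrightarrow> \<alpha> g (a * b) = \<alpha> g a * \<alpha> g b"
  using pa unfolding unital_partial_action_def by auto

lemma a0: "g \<in> G \<Longrightarrow> \<alpha> g 0 = 0"
  using aadd[of g 0 0] Sd_0 by simp

lemma aunit: assumes g: "g \<in> G" shows "\<alpha> g (e (i g)) = e g"
proof -
  have ig: "i g \<in> G" using cl g by auto
  have u: "\<alpha> g (e (i g)) \<in> Sd e g" using amap g e_Sd ig by auto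
  obtain x where x: "x \<in> Sd e (i g)" "\<alpha> g x = e g"
    using bij[OF g] e_Sd[OF g] unfolding bij_betw_def by force
  have "e g = \<alpha> g (x * e (i g))" using x Sd_iff ig by simp
  also have "\<dots> = e g * \<alpha> g (e (i g))" using amul[OF g x(1) e_Sd[OF ig]] x by simp
  also have "\<dots> = \<alpha> g (e (i g))" using u Sd_iff g by (simp add: mult.commute)
  finally show ?thesis by simp
qed

lemma acomp: "g \<in> G \<Longrightarrow> h \<in> G \<Longrightarrow> s g = t h \<Longrightarrow> a \<in> Sd e (i h) \<Longrightarrow> \<alpha> h a \<in> Sd e (i g) \<Longrightarrow>
   a \<in> Sd e (i (m g h)) \<and> \<alpha> g (\<alpha> h a) = \<alpha> (m g h) a"
  using pa amap unfolding unital_partial_action_def by blast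

lemma aobj: "x \<in> objs G s \<Longrightarrow> a \<in> Sd e x \<Longrightarrow> \<alpha> x a = a"
  using pa unfolding unital_partial_action_def by auto

lemma orth: "x \<in> objs G s \<Longrightarrow> y \<in> objs G s \<Longrightarrow> x \<noteq> y \<Longrightarrow> e x * e y = 0"
  using pa unfolding unital_partial_action_def by auto

lemma esum: "(\<Sum>y\<in>objs G s. e y) = 1"
  using pa unfolding unital_partial_action_def by auto

lemma ainv: assumes g: "g \<in> G" and a: "a \<in> Sd e (i g)" shows "\<alpha> (i g) (\<alpha> g a) = a"
proof -
  have ig: "i g \<in> G" using cl g by auto
  have "\<alpha> g a \<in> Sd e (i (i g))" using amap[OF g a] ii g by simp
  from acomp[OF ig g _ a this] have "\<alpha> (i g) (\<alpha> g a) = \<alpha> (m (i g) g) a" using inv g ii by simp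
  also have "m (i g) g = s g" using inv g by simp
  also have "\<alpha> (s g) a = a"
  proof -
    have "a \<in> Sd e (t (i g))" using Sd_t[OF ig] a by auto
    thus ?thesis using aobj s_objs g inv by simp
  qed
  finally show ?thesis .
qed

lemma ainv': assumes g: "g \<in> G" and a: "a \<in> Sd e g" shows "\<alpha> g (\<alpha> (i g) a) = a"
  using ainv[of "i g" a] cl g a ii by simp

end


context upa begin

lemma Sd_eq: "g \<in> G \<Longrightarrow> h \<in> G \<Longrightarrow> Sd e g = Sd e h \<Longrightarrow> e g = e h"
  by (metis Sd_iff e_Sd mult.commute)

definition full :: "'g \<Rightarrow> bool" where
  "full g \<longleftrightarrow> g \<in> G \<and> Sd e (i g) = Sd e (s g) \<and> Sd e g = Sd e (t g)"

lemma full_e: "full g \<Longrightarrow> e (i g) = e (s g) \<and> e g = e (t g)"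
  unfolding full_def using Sd_eq cl by blast

lemma full_inv: "full g \<Longrightarrow> full (i g)"
  unfolding full_def using ii cl inv by auto

lemma full_comp:
  assumes fg: "full g" and fh: "full h" and gh: "s g = t h"
  shows "full (m g h)"
proof -
  have g: "g \<in> G" and h: "h \<in> G" using fg fh full_def by auto
  have ig: "i g \<in> G" and ih: "i h \<in> G" using cl g h by auto
  have gh': "m g h \<in> G" using mcl g h gh by auto
  have igh: "i (m g h) \<in> G" using cl gh' by auto
  have Dg: "Sd e (i g) = Sd e (s g)" "Sd e g = Sd e (t g)" using fg full_def by auto
  have Dh: "Sd e (i h) = Sd e (s h)" "Sd e h = Sd e (t h)" using fh full_def by auto
  have A: "Sd e (i (m g h)) = Sd e (s (m g h))"
  proof
    show "Sd e (i (m g h)) \<subseteq> Sd e (s (m g h))"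
      using Sd_t[OF igh] inv[OF gh'] by simp
  next
    show "Sd e (s (m g h)) \<subseteq> Sd e (i (m g h))"
    proof
      fix a assume "a \<in> Sd e (s (m g h))"
      hence a: "a \<in> Sd e (i h)" using mst g h gh Dh by simp
      have "\<alpha> h a \<in> Sd e (i g)" using amap[OF h a] Dh Dg gh by simp
      thus "a \<in> Sd e (i (m g h))" using acomp[OF g h gh a] by blast
    qed
  qed
  have B: "Sd e (m g h) = Sd e (t (m g h))"
  proof
    show "Sd e (m g h) \<subseteq> Sd e (t (m g h))" using Sd_t[OF gh'] .
  next
    show "Sd e (t (m g h)) \<subseteq> Sd e (m g h)"
    proof
      fix b assume "b \<in> Sd e (t (m g h))"
      hence b: "b \<in> Sd e g" using mst g h gh Dg by simp
      define a1 where "a1 = \<alpha> (i g) b"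
      have a1: "a1 \<in> Sd e (i g)" using amap[OF ig] b ii g unfolding a1_def by simp
      hence a1h: "a1 \<in> Sd e h" using Dg Dh gh by simp
      define a0 where "a0 = \<alpha> (i h) a1"
      have a0: "a0 \<in> Sd e (i h)" using amap[OF ih] a1h ii h unfolding a0_def by simp
      have ha0: "\<alpha> h a0 = a1" using ainv'[OF h a1h] a0_def by simp
      have "a0 \<in> Sd e (i (m g h)) \<and> \<alpha> g (\<alpha> h a0) = \<alpha> (m g h) a0"
        using acomp[OF g h gh a0] ha0 a1 by simp
      moreover have "\<alpha> g a1 = b" using ainv'[OF g b] a1_def by simp
      ultimately have "b = \<alpha> (m g h) a0" "a0 \<in> Sd e (i (m g h))" using ha0 by auto
      thus "b \<in> Sd e (m g h)" using amap[OF gh'] by simp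
    qed
  qed
  show ?thesis using A B gh' full_def by auto
qed

lemma asub: assumes g: "g \<in> G" and a: "a \<in> Sd e (i g)" and b: "b \<in> Sd e (i g)"
  shows "\<alpha> g (a - b) = \<alpha> g a - \<alpha> g b"
proof -
  have ig: "i g \<in> G" using cl g by auto
  have ab: "a - b \<in> Sd e (i g)" using a b Sd_iff[OF ig] by (simp add: left_diff_distrib)
  have "\<alpha> g a = \<alpha> g ((a - b) + b)" by simp
  also have "\<dots> = \<alpha> g (a - b) + \<alpha> g b" using aadd[OF g ab b] .
  finally show ?thesis by simp
qed

lemma key:
  assumes fu: "full gu" and fv: "full gv" and k: "k \<in> G"
    and y: "s gu = s gv" and u: "t gu = s k" and v: "t gv = t k"
    and b: "b \<in> Sd e (s gu)"
  defines "h \<equiv> m (i gv) (m k gu)" and "b' \<equiv> \<alpha> (i gu) (e (i k))"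
  shows "b * b' \<in> Sd e (i h) \<and> \<alpha> k (\<alpha> gu b * e (i k)) = \<alpha> gv (\<alpha> h (b * b'))"
proof -
  have gu: "gu \<in> G" and gv: "gv \<in> G" using fu fv full_def by auto
  have igu: "i gu \<in> G" and igv: "i gv \<in> G" and ik: "i k \<in> G" using cl gu gv k by auto
  have Du: "Sd e (i gu) = Sd e (s gu)" "Sd e gu = Sd e (t gu)" using fu full_def by auto
  have Dv: "Sd e (i gv) = Sd e (s gv)" "Sd e gv = Sd e (t gv)" using fv full_def by auto
  have eik: "e (i k) \<in> Sd e (i (i gu))"
    using Sd_t[OF ik] e_Sd[OF ik] inv[OF k] ii[OF gu] Du u by auto
  have b': "b' \<in> Sd e (i gu)" using amap[OF igu eik] ii[OF gu] unfolding b'_def by simp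
  have bi: "b \<in> Sd e (i gu)" using b Du by simp
  have ab: "b * b' \<in> Sd e (i gu)" using Sd_mult[OF igu b'] by (simp add: mult.commute)
  have gub': "\<alpha> gu b' = e (i k)" using ainv[OF igu] eik ii[OF gu] unfolding b'_def by simp
  have m1: "\<alpha> gu (b * b') = \<alpha> gu b * e (i k)" using amul[OF gu bi b'] gub' by simp
  have in1: "\<alpha> gu (b * b') \<in> Sd e (i k)"
    using m1 Sd_mult(2)[OF ik e_Sd[OF ik]] by simp
  have kgu: "m k gu \<in> G" using mcl k gu u by simp
  from acomp[OF k gu u[symmetric] ab in1]
  have c1: "b * b' \<in> Sd e (i (m k gu))" "\<alpha> k (\<alpha> gu (b * b')) = \<alpha> (m k gu) (b * b')" by auto
  have sv: "s (i gv) = t (m k gu)" using inv gv mst k gu u v by simp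
  have in2: "\<alpha> (m k gu) (b * b') \<in> Sd e (i (i gv))"
  proof -
    have "\<alpha> (m k gu) (b * b') \<in> Sd e (t (m k gu))" using amap[OF kgu c1(1)] Sd_t[OF kgu] by auto
    thus ?thesis using ii[OF gv] Dv mst k gu u v by simp
  qed
  from acomp[OF igv kgu sv c1(1) in2]
  have c2: "b * b' \<in> Sd e (i h)" "\<alpha> (i gv) (\<alpha> (m k gu) (b * b')) = \<alpha> h (b * b')"
    unfolding h_def by auto
  have "\<alpha> gv (\<alpha> (i gv) (\<alpha> (m k gu) (b * b'))) = \<alpha> (m k gu) (b * b')"
    using ainv'[OF gv] in2 ii[OF gv] by simp
  thus ?thesis using c2 c1 m1 by simp
qed

end

locale usub = upa +
  fixes K
  assumes sub: "subgroupoid K G s t m i" and wide: "objs G s \<subseteq> K"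
begin

lemma KG: "K \<subseteq> G" using sub unfolding subgroupoid_def by blast
lemma Kcl: "k \<in> K \<Longrightarrow> s k \<in> K" "k \<in> K \<Longrightarrow> t k \<in> K" "k \<in> K \<Longrightarrow> i k \<in> K"
  using sub unfolding subgroupoid_def by blast+
lemma Kmcl: "g \<in> K \<Longrightarrow> h \<in> K \<Longrightarrow> s g = t h \<Longrightarrow> m g h \<in> K"
  using sub unfolding subgroupoid_def by blast

lemma objsK: "objs K s = objs G s"
proof
  show "objs K s \<subseteq> objs G s" using KG unfolding objs_def by auto
next
  show "objs G s \<subseteq> objs K s"
  proof
    fix x assume x: "x \<in> objs G s"
    hence "x \<in> K" "s x = x" using wide objs_iff by auto
    thus "x \<in> objs K s" unfolding objs_def by (auto intro: image_eqI[where x=x])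
  qed
qed

definition comp :: "'a \<Rightarrow> 'a set" where
  "comp x = {y \<in> objs K s. hom K s t x y \<noteq> {}}"

lemma components_eq: "components K s t = comp ` objs G s"
  unfolding components_def comp_def objsK by simp

lemma comp_sub: "comp x \<subseteq> objs G s" unfolding comp_def objsK by auto

lemma comp_self: "x \<in> objs G s \<Longrightarrow> x \<in> comp x"
  unfolding comp_def hom_def objsK using wide objs_iff objs_t by auto

lemma hom_inv: "k \<in> hom K s t x y \<Longrightarrow> i k \<in> hom K s t y x"
  unfolding hom_def using Kcl inv KG by auto

lemma hom_comp: "k \<in> hom K s t y z \<Longrightarrow> h \<in> hom K s t x y \<Longrightarrow> m k h \<in> hom K s t x z"
  unfolding hom_def using Kmcl mst KG by (auto simp: subset_iff)

lemma comp_eq: assumes w: "w \<in> comp x" shows "comp w = comp x"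
proof -
  obtain h where h: "h \<in> hom K s t x w" using w comp_def by auto
  show ?thesis
  proof
    show "comp w \<subseteq> comp x" unfolding comp_def using hom_comp[OF _ h] by blast
  next
    show "comp x \<subseteq> comp w" unfolding comp_def using hom_comp[OF _ hom_inv[OF h]] by blast
  qed
qed

lemma comp_edge: assumes k: "k \<in> K" shows "s k \<in> comp x \<longleftrightarrow> t k \<in> comp x"
proof -
  have kk: "k \<in> hom K s t (s k) (t k)" unfolding hom_def using k by auto
  have ob: "s k \<in> objs K s" "t k \<in> objs K s" using s_objs t_objs KG k objsK by auto
  show ?thesis unfolding comp_def
    using hom_comp[OF kk] hom_comp[OF hom_inv[OF kk]] ob by blast
qed

lemma objs_full_sub: assumes Y: "Y \<in> components K s t" shows "objs (full_sub K s t Y) s = Y"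
proof
  show "objs (full_sub K s t Y) s \<subseteq> Y" unfolding objs_def full_sub_def by auto
next
  show "Y \<subseteq> objs (full_sub K s t Y) s"
  proof
    fix y assume y: "y \<in> Y"
    hence yo: "y \<in> objs G s" using Y components_eq comp_sub by auto
    hence "y \<in> full_sub K s t Y" "s y = y" using wide objs_iff objs_t y unfolding full_sub_def by auto
    thus "y \<in> objs (full_sub K s t Y) s" unfolding objs_def by (auto intro: image_eqI[where x=y])
  qed
qed

definition gt :: "'a set \<Rightarrow> bool" where
  "gt Y \<longleftrightarrow> Y \<in> components K s t \<and> group_type_conn (full_sub K s t Y) s t i e"

lemma L1: assumes Y: "gt Y" and y: "y \<in> Y" and z: "z \<in> Y"
  shows "\<exists>g\<in>K. s g = y \<and> t g = z \<and> full g"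
proof -
  have Yc: "Y \<in> components K s t" using Y gt_def by auto
  obtain x \<tau> where x: "x \<in> Y" and \<tau>: "\<forall>w\<in>Y. \<tau> w \<in> hom (full_sub K s t Y) s t x w \<and>
            Sd e (i (\<tau> w)) = Sd e x \<and> Sd e (\<tau> w) = Sd e w"
    using Y unfolding gt_def group_type_conn_def objs_full_sub[OF Yc] by blast
  have f: "\<tau> w \<in> K \<and> s (\<tau> w) = x \<and> t (\<tau> w) = w \<and> full (\<tau> w)" if "w \<in> Y" for w
    using \<tau> that KG unfolding hom_def full_sub_def full_def by auto
  let ?g = "m (\<tau> z) (i (\<tau> y))"
  have c: "s (\<tau> z) = t (i (\<tau> y))" using f[OF y] f[OF z] inv(2)[of "\<tau> y"] KG by auto
  have "?g \<in> K" using Kmcl f y z Kcl c by auto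
  moreover have "full ?g" using full_comp[OF _ full_inv c] f y z by auto
  moreover have tG: "\<tau> y \<in> G" "\<tau> z \<in> G" "i (\<tau> y) \<in> G" using f[OF y] f[OF z] KG cl(3)[of "\<tau> y"] by auto
  moreover have "s ?g = y" "t ?g = z" using mst[OF tG(2) tG(3) c] inv(1)[OF tG(1)] f[OF y] f[OF z] by auto
  ultimately show ?thesis by blast
qed

abbreviation Inv where "Inv \<equiv> invariants UNIV K i e \<alpha>"
abbreviation Loc where "Loc y \<equiv> invariants (Sd e y) (hom K s t y y) i e \<alpha>"

lemma Inv_iff: "a \<in> Inv \<longleftrightarrow> (\<forall>k\<in>K. \<alpha> k (a * e (i k)) = a * e k)"
  unfolding invariants_def by auto

lemma eik_Sd: "k \<in> G \<Longrightarrow> a * e (i k) \<in> Sd e (i k)" using Sd_mult cl e_Sd by metis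

lemma Inv_add: "a \<in> Inv \<Longrightarrow> b \<in> Inv \<Longrightarrow> a + b \<in> Inv"
  unfolding Inv_iff using KG aadd[OF _ eik_Sd eik_Sd] by (auto simp: distrib_right)
lemma Inv_sub: "a \<in> Inv \<Longrightarrow> b \<in> Inv \<Longrightarrow> a - b \<in> Inv"
  unfolding Inv_iff using KG asub[OF _ eik_Sd eik_Sd] by (auto simp: left_diff_distrib)
lemma Inv_mul: assumes "a \<in> Inv" "b \<in> Inv" shows "a * b \<in> Inv"
  unfolding Inv_iff
proof
  fix k assume k: "k \<in> K"
  hence kG: "k \<in> G" "i k \<in> G" using KG cl by auto
  have "a * b * e (i k) = (a * e (i k)) * (b * e (i k))"
    using idem[OF kG(2)] by (metis mult.assoc mult.commute)
  hence "\<alpha> k (a * b * e (i k)) = \<alpha> k (a * e (i k)) * \<alpha> k (b * e (i k))"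
    using amul[OF kG(1) eik_Sd eik_Sd] kG by simp
  also have "\<dots> = a * e k * (b * e k)" using assms k Inv_iff by auto
  also have "\<dots> = a * b * e k" using idem[OF kG(1)] by (metis mult.assoc mult.commute)
  finally show "\<alpha> k (a * b * e (i k)) = a * b * e k" .
qed
lemma Inv_1: "1 \<in> Inv" unfolding Inv_iff using aunit KG by auto
lemma Inv_0: "0 \<in> Inv" unfolding Inv_iff using a0 KG by auto

lemma L2: assumes a: "a \<in> Inv" and g: "g \<in> K" "full g" and z: "a * e (s g) = 0"
  shows "a * e (t g) = 0"
proof -
  have gG: "g \<in> G" using g KG by auto
  have "\<alpha> g (a * e (i g)) = a * e g" using a g Inv_iff by auto
  thus ?thesis using full_e[OF g(2)] z a0[OF gG] by simp
qed

lemma decomp: "a = (\<Sum>z\<in>objs G s. a * e z)"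
  using esum by (metis mult.right_neutral sum_distrib_left)

lemma vanish: "(\<forall>z\<in>objs G s. a * e z = 0) \<Longrightarrow> a = 0"
  using decomp[of a] by simp

lemma e_obj_k: "k \<in> G \<Longrightarrow> e (i k) * e (s k) = e (i k)" "k \<in> G \<Longrightarrow> e k * e (t k) = e k"
  using e_t[of "i k"] e_t[of k] cl(3)[of k] inv(2)[of k] by auto

lemma L4: assumes a: "a \<in> Inv" and y: "y \<in> objs G s" shows "a * e y \<in> Loc y"
  unfolding invariants_def
proof (intro CollectI conjI ballI)
  have yG: "y \<in> G" using y objs_iff by auto
  show "a * e y \<in> Sd e y" using Sd_mult(2)[OF yG e_Sd[OF yG]] by (simp add: mult.commute)
  fix k assume k: "k \<in> hom K s t y y"
  hence kK: "k \<in> K" and sk: "s k = y" "t k = y" and kG: "k \<in> G" using KG unfolding hom_def by auto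
  have "a * e y * e (i k) = a * e (i k)" using e_obj_k(1)[OF kG] sk by (metis mult.assoc mult.commute)
  moreover have "a * e y * e k = a * e k" using e_obj_k(2)[OF kG] sk by (metis mult.assoc mult.commute)
  ultimately show "\<alpha> k (a * e y * e (i k)) = a * e y * e k" using a kK Inv_iff by simp
qed

lemma Loc_iff: "b \<in> Loc y \<longleftrightarrow> b \<in> Sd e y \<and> (\<forall>k\<in>hom K s t y y. \<alpha> k (b * e (i k)) = b * e k)"
  unfolding invariants_def by auto

end


context usub begin

lemma gt_comp: assumes Y: "gt Y" and y: "y \<in> Y" shows "Y = comp y" "Y \<subseteq> objs G s"
proof -
  obtain x where x: "x \<in> objs G s" "Y = comp x" using Y unfolding gt_def components_eq by auto
  show "Y = comp y" using comp_eq y x by simp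
  show "Y \<subseteq> objs G s" using x comp_sub by simp
qed

lemma L3: assumes Y: "gt Y" and y: "y \<in> Y" and b: "b \<in> Loc y"
  shows "\<exists>c\<in>Inv. c * e y = b \<and> (\<forall>w\<in>objs G s. w \<notin> Y \<longrightarrow> c * e w = 0)"
proof -
  have Yc: "Y = comp y" and Yo: "Y \<subseteq> objs G s" using gt_comp[OF Y y] by auto
  have finY: "finite Y" using finite_subset[OF Yo finobjs] .
  have yo: "y \<in> objs G s" using y Yo by auto
  have yG: "y \<in> G" using yo objs_iff by auto
  have edge: "k \<in> K \<Longrightarrow> s k \<in> Y \<longleftrightarrow> t k \<in> Y" for k using comp_edge Yc by simp
  define gz where "gz z = (SOME g. g \<in> K \<and> s g = y \<and> t g = z \<and> full g)" for z
  have gz: "gz z \<in> K \<and> s (gz z) = y \<and> t (gz z) = z \<and> full (gz z)" if "z \<in> Y" for z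
    unfolding gz_def using L1[OF Y y that] by (rule someI_ex[OF bexE]) blast
  have bS: "b \<in> Sd e y" and binv: "\<forall>k\<in>hom K s t y y. \<alpha> k (b * e (i k)) = b * e k"
    using b Loc_iff by auto
  have DI: "Sd e (i (gz z)) = Sd e y" "Sd e (gz z) = Sd e z" if "z \<in> Y" for z
    using gz[OF that] full_def by auto
  have az: "\<alpha> (gz z) b \<in> Sd e z" if "z \<in> Y" for z
    using amap[of "gz z" b] gz[OF that] DI[OF that] bS KG by auto
  define c where "c = (\<Sum>z\<in>Y. \<alpha> (gz z) b)"
  have cw: "c * e w = (if w \<in> Y then \<alpha> (gz w) b else 0)" if w: "w \<in> objs G s" for w
  proof -
    have "c * e w = (\<Sum>z\<in>Y. \<alpha> (gz z) b * e w)" unfolding c_def by (simp add: sum_distrib_right)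
    also have "\<dots> = (\<Sum>z\<in>Y. if z = w then \<alpha> (gz w) b else 0)"
    proof (rule sum.cong[OF refl])
      fix z assume z: "z \<in> Y"
      have zG: "z \<in> G" and zo: "z \<in> objs G s" using z Yo objs_iff by auto
      have az': "\<alpha> (gz z) b * e z = \<alpha> (gz z) b" using az[OF z] Sd_iff[OF zG] by simp
      show "\<alpha> (gz z) b * e w = (if z = w then \<alpha> (gz w) b else 0)"
      proof (cases "z = w")
        case True thus ?thesis using az' by simp
      next
        case False
        have "\<alpha> (gz z) b * e w = \<alpha> (gz z) b * (e z * e w)" using az' by (metis mult.assoc)
        thus ?thesis using orth[OF zo w False] False by simp
      qed
    qed
    also have "\<dots> = (if w \<in> Y then \<alpha> (gz w) b else 0)" using finY by (simp add: sum.delta')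
    finally show ?thesis .
  qed
  have cy: "c * e y = b"
  proof -
    have g: "gz y \<in> hom K s t y y" using gz[OF y] unfolding hom_def by auto
    have fe: "e (i (gz y)) = e y" "e (gz y) = e y" using full_e gz[OF y] by auto
    have "\<alpha> (gz y) (b * e (i (gz y))) = b * e (gz y)" using binv g by blast
    hence "\<alpha> (gz y) b = b" using fe bS Sd_iff[OF yG] by simp
    thus ?thesis using cw[OF yo] y by simp
  qed
  have cInv: "c \<in> Inv"
    unfolding Inv_iff
  proof
    fix k assume kK: "k \<in> K"
    have kG: "k \<in> G" and ikG: "i k \<in> G" using kK KG cl by auto
    have uo: "s k \<in> objs G s" and vo: "t k \<in> objs G s" using s_objs t_objs kG by auto
    have ce1: "c * e (i k) = c * e (s k) * e (i k)" using e_obj_k(1)[OF kG] by (metis mult.assoc mult.commute)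
    have ce2: "c * e k = c * e (t k) * e k" using e_obj_k(2)[OF kG] by (metis mult.assoc mult.commute)
    show "\<alpha> k (c * e (i k)) = c * e k"
    proof (cases "s k \<in> Y")
      case False
      hence "t k \<notin> Y" using edge kK by simp
      thus ?thesis using False ce1 ce2 cw uo vo a0[OF kG] by simp
    next
      case True
      hence v: "t k \<in> Y" using edge kK by simp
      let ?gu = "gz (s k)" and ?gv = "gz (t k)"
      have gu: "?gu \<in> K" "s ?gu = y" "t ?gu = s k" "full ?gu" using gz[OF True] by auto
      have gv: "?gv \<in> K" "s ?gv = y" "t ?gv = t k" "full ?gv" using gz[OF v] by auto
      have guG: "?gu \<in> G" and gvG: "?gv \<in> G" using gu gv KG by auto
      define h where "h = m (i ?gv) (m k ?gu)"
      define b' where "b' = \<alpha> (i ?gu) (e (i k))"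
      have kgu: "m k ?gu \<in> K" using Kmcl kK gu by simp
      have kguG: "m k ?gu \<in> G" using kgu KG by auto
      have hK: "h \<in> K" unfolding h_def
        using Kmcl[OF Kcl(3)[OF gv(1)] kgu] inv[OF gvG] mst[OF kG guG] gu gv by simp
      have hG: "h \<in> G" using hK KG by auto
      have hy: "s h = y" "t h = y" unfolding h_def
        using mst[OF cl(3)[OF gvG] kguG] mst[OF kG guG] inv[OF gvG] gu gv by simp_all
      have hhom: "h \<in> hom K s t y y" using hK hy unfolding hom_def by auto
      have ihG: "i h \<in> G" using cl hG by auto
      have yy: "s ?gu = s ?gv" using gu gv by simp
      have bS': "b \<in> Sd e (s ?gu)" using bS gu by simp
      have eyS: "e y \<in> Sd e (s ?gu)" using e_Sd[OF yG] gu by simp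
      note K1 = key[OF gu(4) gv(4) kG yy gu(3) gv(3) bS', folded h_def b'_def]
      note K2 = key[OF gu(4) gv(4) kG yy gu(3) gv(3) eyS, folded h_def b'_def]
      have eikS: "e (i k) \<in> Sd e (i (i ?gu))"
        using Sd_t[OF ikG] e_Sd[OF ikG] inv[OF kG] ii[OF guG] DI(2)[OF True] gu by auto
      have b'S: "b' \<in> Sd e y" unfolding b'_def
        using amap[OF cl(3)[OF guG] eikS] DI(1)[OF True] by simp
      have eyb': "e y * b' = b'" using b'S Sd_iff[OF yG] by (simp add: mult.commute)
      have e1: "\<alpha> ?gu (e y) = e (s k)"
        using aunit[OF guG] full_e[OF gu(4)] gu by simp
      have e2: "e (s k) * e (i k) = e (i k)" using e_obj_k(1)[OF kG] by (simp add: mult.commute)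
      have ek: "e k = \<alpha> ?gv (\<alpha> h b')" using K2 e1 e2 eyb' aunit[OF kG] by simp
      have b'ih: "b' \<in> Sd e (i h)" using K2 eyb' by simp
      have inv_h: "\<alpha> h (b * e (i h)) = b * e h" using binv hhom by blast
      have bb': "b * b' = (b * e (i h)) * b'" using b'ih Sd_iff[OF ihG] by (metis mult.assoc mult.commute)
      have bih: "b * e (i h) \<in> Sd e (i h)" using Sd_mult(2)[OF ihG e_Sd[OF ihG]] by simp
      have hb'S: "\<alpha> h b' \<in> Sd e h" using amap[OF hG b'ih] .
      have "\<alpha> h (b * b') = b * e h * \<alpha> h b'" using amul[OF hG bih b'ih] bb' inv_h by simp
      also have "\<dots> = b * \<alpha> h b'" using hb'S Sd_iff[OF hG] by (metis mult.assoc mult.commute)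
      finally have hbb: "\<alpha> h (b * b') = b * \<alpha> h b'" .
      have hb'y: "\<alpha> h b' \<in> Sd e (i ?gv)" using Sd_t[OF hG] hb'S hy DI(1)[OF v] by auto
      have bgv: "b \<in> Sd e (i ?gv)" using bS DI(1)[OF v] by simp
      have fin: "\<alpha> k (\<alpha> ?gu b * e (i k)) = \<alpha> ?gv b * e k"
        using K1 hbb amul[OF gvG bgv hb'y] ek by simp
      show ?thesis using fin ce1 ce2 cw[OF uo] cw[OF vo] True v by simp
    qed
  qed
  show ?thesis using cInv cy cw by auto
qed

end


context usub begin

lemma U: assumes Y: "gt Y" and y: "y \<in> Y" and c1: "c1 \<in> Inv" and c2: "c2 \<in> Inv"
  and v1: "\<forall>w\<in>objs G s. w \<notin> Y \<longrightarrow> c1 * e w = 0"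
  and v2: "\<forall>w\<in>objs G s. w \<notin> Y \<longrightarrow> c2 * e w = 0"
  and eq: "c1 * e y = c2 * e y"
  shows "c1 = c2"
proof -
  have d: "c1 - c2 \<in> Inv" using Inv_sub c1 c2 by auto
  have dy: "(c1 - c2) * e y = 0" using eq by (simp add: left_diff_distrib)
  have "\<forall>w\<in>objs G s. (c1 - c2) * e w = 0"
  proof
    fix w assume w: "w \<in> objs G s"
    show "(c1 - c2) * e w = 0"
    proof (cases "w \<in> Y")
      case True
      obtain g where g: "g \<in> K" "s g = y" "t g = w" "full g" using L1[OF Y y True] by blast
      show ?thesis using L2[OF d g(1) g(4)] g dy by simp
    next
      case False thus ?thesis using v1 v2 w by (simp add: left_diff_distrib)
    qed
  qed
  thus ?thesis using vanish by fastforce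
qed

definition lift :: "'a set \<Rightarrow> 'a \<Rightarrow> 'b \<Rightarrow> 'b" where
  "lift Y y b = (SOME c. c \<in> Inv \<and> c * e y = b \<and> (\<forall>w\<in>objs G s. w \<notin> Y \<longrightarrow> c * e w = 0))"

lemma lift: assumes Y: "gt Y" and y: "y \<in> Y" and b: "b \<in> Loc y"
  shows "lift Y y b \<in> Inv \<and> lift Y y b * e y = b \<and> (\<forall>w\<in>objs G s. w \<notin> Y \<longrightarrow> lift Y y b * e w = 0)"
  unfolding lift_def using L3[OF Y y b] by (rule someI_ex[OF bexE]) blast

lemma lift_unique: assumes Y: "gt Y" and y: "y \<in> Y" and b: "b \<in> Loc y"
  and c: "c \<in> Inv" "c * e y = b" "\<forall>w\<in>objs G s. w \<notin> Y \<longrightarrow> c * e w = 0"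
  shows "lift Y y b = c"
  using U[OF Y y _ c(1) _ c(3)] lift[OF Y y b] c(2) by auto

lemma yobj: "gt Y \<Longrightarrow> y \<in> Y \<Longrightarrow> y \<in> objs G s" using gt_comp(2) by blast
lemma yG: "gt Y \<Longrightarrow> y \<in> Y \<Longrightarrow> y \<in> G" using yobj objs_iff by auto

lemma ey_idem: "gt Y \<Longrightarrow> y \<in> Y \<Longrightarrow> e y * e y = e y" using idem yG by auto

lemma Loc_add: assumes Y: "gt Y" and y: "y \<in> Y" and a: "a \<in> Loc y" and b: "b \<in> Loc y"
  shows "a + b \<in> Loc y"
proof -
  have "(lift Y y a + lift Y y b) * e y \<in> Loc y" using L4 Inv_add lift[OF Y y a] lift[OF Y y b] yobj[OF Y y] by auto
  thus ?thesis using lift[OF Y y a] lift[OF Y y b] by (simp add: distrib_right)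
qed

lemma Loc_mul: assumes Y: "gt Y" and y: "y \<in> Y" and a: "a \<in> Loc y" and b: "b \<in> Loc y"
  shows "a * b \<in> Loc y"
proof -
  have "(lift Y y a * lift Y y b) * e y \<in> Loc y" using L4 Inv_mul lift[OF Y y a] lift[OF Y y b] yobj[OF Y y] by auto
  moreover have "(lift Y y a * lift Y y b) * e y = (lift Y y a * e y) * (lift Y y b * e y)"
    using ey_idem[OF Y y] by (metis mult.assoc mult.commute)
  ultimately show ?thesis using lift[OF Y y a] lift[OF Y y b] by simp
qed

lemma Loc_0: "gt Y \<Longrightarrow> y \<in> Y \<Longrightarrow> 0 \<in> Loc y" using L4[OF Inv_0] yobj by fastforce

lemma Loc_Sd: "gt Y \<Longrightarrow> y \<in> Y \<Longrightarrow> b \<in> Loc y \<Longrightarrow> b * e y = b"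
  "gt Y \<Longrightarrow> y \<in> Y \<Longrightarrow> b \<in> Loc y \<Longrightarrow> e y * b = b"
  using Loc_iff Sd_iff yG by (auto simp: mult.commute)

lemma lift_add: assumes Y: "gt Y" and y: "y \<in> Y" and a: "a \<in> Loc y" and b: "b \<in> Loc y"
  shows "lift Y y (a + b) = lift Y y a + lift Y y b"
  using lift_unique[OF Y y Loc_add[OF Y y a b]] lift[OF Y y a] lift[OF Y y b] Inv_add
  by (simp add: distrib_right)

lemma lift_mul: assumes Y: "gt Y" and y: "y \<in> Y" and a: "a \<in> Loc y" and b: "b \<in> Loc y"
  shows "lift Y y (a * b) = lift Y y a * lift Y y b"
proof (rule lift_unique[OF Y y Loc_mul[OF Y y a b]])
  show "lift Y y a * lift Y y b \<in> Inv" using lift[OF Y y a] lift[OF Y y b] Inv_mul by auto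
  show "lift Y y a * lift Y y b * e y = a * b"
    using ey_idem[OF Y y] lift[OF Y y a] lift[OF Y y b] by (metis mult.assoc mult.commute)
  show "\<forall>w\<in>objs G s. w \<notin> Y \<longrightarrow> lift Y y a * lift Y y b * e w = 0"
    using lift[OF Y y b] by (simp add: mult.assoc)
qed

lemma lift_0: assumes Y: "gt Y" and y: "y \<in> Y" shows "lift Y y 0 = 0"
  using lift_unique[OF Y y Loc_0[OF Y y] Inv_0] by simp

lemma lift_cmul: assumes Y: "gt Y" and y: "y \<in> Y" and c: "c \<in> Inv" and a: "a \<in> Loc y"
  shows "lift Y y (c * e y * a) = c * lift Y y a"
proof -
  have ca: "c * e y * a \<in> Loc y" using Loc_mul[OF Y y L4[OF c yobj[OF Y y]] a] .
  show ?thesis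
  proof (rule lift_unique[OF Y y ca])
    show "c * lift Y y a \<in> Inv" using Inv_mul c lift[OF Y y a] by auto
    show "c * lift Y y a * e y = c * e y * a"
      using lift[OF Y y a] Loc_Sd(2)[OF Y y a] by (metis mult.assoc)
    show "\<forall>w\<in>objs G s. w \<notin> Y \<longrightarrow> c * lift Y y a * e w = 0"
      using lift[OF Y y a] by (simp add: mult.assoc)
  qed
qed

lemma lift_e: assumes Y: "gt Y" and y: "y \<in> Y" and w: "w \<in> Y"
  shows "lift Y y (e y) * e w = e w"
proof -
  have ey: "e y \<in> Loc y" using L4[OF Inv_1 yobj[OF Y y]] by simp
  have d: "lift Y y (e y) - 1 \<in> Inv" using Inv_sub lift[OF Y y ey] Inv_1 by auto
  have dy: "(lift Y y (e y) - 1) * e y = 0" using lift[OF Y y ey] by (simp add: left_diff_distrib)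
  obtain g where g: "g \<in> K" "s g = y" "t g = w" "full g" using L1[OF Y y w] by blast
  have "(lift Y y (e y) - 1) * e w = 0" using L2[OF d g(1) g(4)] g dy by simp
  thus ?thesis by (simp add: left_diff_distrib)
qed

end


lemma sdiff_Nil: "sdiff c [] = (\<lambda>_. 0)" unfolding sdiff_def fsum_def by simp
lemma sdiff_append: "sdiff c (xs @ ys) = (\<lambda>q. sdiff c xs q + sdiff c ys q)"
  by (simp add: sdiff_def fsum_append fun_eq_iff)

lemma sdiff_concat:
  assumes "\<forall>Y\<in>set L. sdiff c (f Y) \<in> tensor_rel B C"
  shows "sdiff c (concat (map f L)) \<in> tensor_rel B C"
  using assms
proof (induction L)
  case Nil then show ?case by (simp add: sdiff_Nil tensor_rel.zero)
next
  case (Cons Y L) then show ?case by (simp add: sdiff_append rel_add)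
qed

lemma sum_concat: "(\<Sum>(a, b)\<leftarrow>concat (map f L). (a::'r::comm_ring_1) * b) = (\<Sum>Y\<leftarrow>L. (\<Sum>(a, b)\<leftarrow>f Y. a * b))"
  by (induction L) auto

lemma sum_list_set: "distinct L \<Longrightarrow> (\<Sum>Y\<leftarrow>L. g Y) = sum g (set L)"
  by (induction L) auto

lemma inv_mono: "K1 \<subseteq> K2 \<Longrightarrow> invariants A K2 i e \<alpha> \<subseteq> invariants A K1 i e \<alpha>"
  unfolding invariants_def by auto

theorem lemma5p2:
  fixes G H :: "'g set" and s t i :: "'g \<Rightarrow> 'g" and m :: "'g \<Rightarrow> 'g \<Rightarrow> 'g"
    and e :: "'g \<Rightarrow> 'r::comm_ring_1" and \<alpha> :: "'g \<Rightarrow> 'r \<Rightarrow> 'r"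
    and rep :: "'g set \<Rightarrow> 'g"
  assumes "groupoid G s t m i" and "finite G" and "connected_gpd G s t"
    and "unital_partial_action G s t m i e \<alpha>"
    and "group_type_conn G s t i e"
    and "\<forall>g\<in>G. e g \<noteq> 0"
    and "H \<in> wSub G s t m i e"
    and "\<forall>Y\<in>components H s t. rep Y \<in> Y"
  shows "separable (invariants UNIV G i e \<alpha>) (invariants UNIV H i e \<alpha>) 1 \<longleftrightarrow>
    (\<forall>Y\<in>components H s t.
       separable (invariants (Sd e (rep Y)) (hom G s t (rep Y) (rep Y)) i e \<alpha>)
                 (invariants (Sd e (rep Y)) (hom H s t (rep Y) (rep Y)) i e \<alpha>)
                 (e (rep Y)))"
proof -
  interpret upa G s t i m e \<alpha> using assms(1,4,2) by unfold_locales
  have wH: "wide_subgroupoid H G s t m i" and gtH: "group_type H s t i e"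
    using assms(7) unfolding wSub_def by auto
  interpret H: usub G s t i m e \<alpha> H using wH unfolding wide_subgroupoid_def by unfold_locales auto
  interpret GG: usub G s t i m e \<alpha> G
  proof unfold_locales
    show "subgroupoid G G s t m i" unfolding subgroupoid_def using cl mcl by auto
    show "objs G s \<subseteq> G" using objs_iff by auto
  qed
  have Hgt: "H.gt Y" if "Y \<in> components H s t" for Y
    using gtH that unfolding H.gt_def group_type_def by auto
  have Ggt: "GG.gt (objs G s)"
  proof -
    obtain x0 where x0: "x0 \<in> objs G s" using assms(5) unfolding group_type_conn_def by auto
    have "GG.comp x0 = objs G s"
      using assms(3) x0 unfolding GG.comp_def connected_gpd_def by auto
    hence c: "objs G s \<in> components G s t" using x0 GG.components_eq by auto
    have "full_sub G s t (objs G s) = G" unfolding full_sub_def using s_objs t_objs by auto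
    thus ?thesis using c assms(5) unfolding GG.gt_def by simp
  qed
  have Rlift: "\<exists>r'\<in>GG.Inv. r' * e y = r" if "y \<in> objs G s" "r \<in> GG.Loc y" for y r
    using GG.L3[OF Ggt that] by auto
  have mono1: "GG.Inv \<subseteq> H.Inv" using inv_mono H.KG by blast
  have mono2: "GG.Loc y \<subseteq> H.Loc y" for y using inv_mono[of "hom H s t y y" "hom G s t y y"] H.KG
    unfolding hom_def by blast
  have ry: "rep Y \<in> Y" "H.gt Y" "rep Y \<in> objs G s" "rep Y \<in> G" if "Y \<in> components H s t" for Y
  proof -
    have a: "rep Y \<in> Y" "H.gt Y" using assms(8) that Hgt by auto
    thus "rep Y \<in> Y" "H.gt Y" "rep Y \<in> objs G s" "rep Y \<in> G" using H.yobj[OF a(2) a(1)] H.yG[OF a(2) a(1)] by auto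
  qed
  show ?thesis
  proof
    assume sep: "separable GG.Inv H.Inv 1"
    show "\<forall>Y\<in>components H s t. separable (GG.Loc (rep Y)) (H.Loc (rep Y)) (e (rep Y))"
    proof
      fix Y assume Yc: "Y \<in> components H s t"
      define y where "y = rep Y"
      have y: "y \<in> Y" "H.gt Y" "y \<in> objs G s" "y \<in> G" using ry[OF Yc] y_def by auto
      have id: "e y * e y = e y" using idem y by auto
      have "\<exists>ys. set ys \<subseteq> H.Loc y \<times> H.Loc y \<and> (\<Sum>(a, b)\<leftarrow>ys. a * b) = 1 * e y \<and>
         (\<forall>c\<in>H.Inv. \<forall>c'. (\<forall>a\<in>H.Inv. c * a * e y = c' * (a * e y) \<and> a * c * e y = a * e y * c') \<longrightarrow>
            sdiff c' ys \<in> tensor_rel (GG.Loc y) (H.Loc y))"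
      proof (rule sep_push[OF sep, where F = "\<lambda>a. a * e y"])
        show "\<forall>a\<in>H.Inv. a * e y \<in> H.Loc y" using H.L4 y by auto
        show "\<forall>a\<in>H.Inv. \<forall>b\<in>H.Inv. (a + b) * e y = a * e y + b * e y" by (simp add: distrib_right)
        show "\<forall>a\<in>H.Inv. \<forall>b\<in>H.Inv. a * b * e y = a * e y * (b * e y)" using id by (metis mult.assoc mult.commute)
        show "0 * e y = 0" by simp
        show "0 \<in> H.Inv" using H.Inv_0 .
        show "\<forall>a\<in>H.Inv. \<forall>b\<in>H.Inv. a + b \<in> H.Inv" using H.Inv_add by auto
        show "\<forall>a\<in>H.Inv. \<forall>b\<in>H.Inv. a * b \<in> H.Inv" using H.Inv_mul by auto
        show "\<forall>a\<in>H.Inv. \<forall>b\<in>H.Inv. \<forall>r\<in>GG.Inv. \<exists>r'\<in>GG.Loc y. a * r * e y = a * e y * r' \<and> r * b * e y = r' * (b * e y)"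
        proof (intro ballI bexI)
          fix a b r assume r: "r \<in> GG.Inv"
          show "r * e y \<in> GG.Loc y" using GG.L4[OF r y(3)] .
          show "a * r * e y = a * e y * (r * e y) \<and> r * b * e y = r * e y * (b * e y)"
            using id by (metis mult.assoc mult.commute)
        qed
      qed
      then obtain ys where ys: "set ys \<subseteq> H.Loc y \<times> H.Loc y" "(\<Sum>(a, b)\<leftarrow>ys. a * b) = e y"
        "\<And>c c'. c \<in> H.Inv \<Longrightarrow> (\<forall>a\<in>H.Inv. c * a * e y = c' * (a * e y) \<and> a * c * e y = a * e y * c') \<Longrightarrow>
            sdiff c' ys \<in> tensor_rel (GG.Loc y) (H.Loc y)" by auto
      have cent: "\<forall>c'\<in>H.Loc y. sdiff c' ys \<in> tensor_rel (GG.Loc y) (H.Loc y)"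
      proof
        fix c' assume c': "c' \<in> H.Loc y"
        obtain c where c: "c \<in> H.Inv" "c * e y = c'" using H.L3[OF y(2) y(1) c'] by auto
        have "\<forall>a\<in>H.Inv. c * a * e y = c' * (a * e y) \<and> a * c * e y = a * e y * c'"
        proof
          fix a
          have "c * a * e y = (c * e y) * (a * e y)" using id by (metis mult.assoc mult.commute)
          moreover have "a * c * e y = (a * e y) * (c * e y)" using id by (metis mult.assoc mult.commute)
          ultimately show "c * a * e y = c' * (a * e y) \<and> a * c * e y = a * e y * c'" using c(2) by simp
        qed
        thus "sdiff c' ys \<in> tensor_rel (GG.Loc y) (H.Loc y)" using ys(3)[OF c(1)] by blast
      qed
      have "separable (GG.Loc y) (H.Loc y) (e y)"
        unfolding separable_sdiff using ys(1,2) cent by blast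
      thus "separable (GG.Loc (rep Y)) (H.Loc (rep Y)) (e (rep Y))" using y_def by simp
    qed
  next
    assume loc: "\<forall>Y\<in>components H s t. separable (GG.Loc (rep Y)) (H.Loc (rep Y)) (e (rep Y))"
    have P: "\<exists>ys. set ys \<subseteq> H.Inv \<times> H.Inv \<and> (\<Sum>(a, b)\<leftarrow>ys. a * b) = H.lift Y (rep Y) (e (rep Y)) \<and>
       (\<forall>c\<in>H.Inv. sdiff c ys \<in> tensor_rel GG.Inv H.Inv)" if Yc: "Y \<in> components H s t" for Y
    proof -
      define y where "y = rep Y"
      have y: "y \<in> Y" "H.gt Y" "y \<in> objs G s" "y \<in> G" using ry[OF Yc] y_def by auto
      have sep: "separable (GG.Loc y) (H.Loc y) (e y)" using loc Yc y_def by auto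
      have "\<exists>ys. set ys \<subseteq> H.Inv \<times> H.Inv \<and> (\<Sum>(a, b)\<leftarrow>ys. a * b) = H.lift Y y (e y) \<and>
         (\<forall>c\<in>H.Loc y. \<forall>c'. (\<forall>a\<in>H.Loc y. H.lift Y y (c * a) = c' * H.lift Y y a \<and>
              H.lift Y y (a * c) = H.lift Y y a * c') \<longrightarrow>
            sdiff c' ys \<in> tensor_rel GG.Inv H.Inv)"
      proof (rule sep_push[OF sep])
        show "\<forall>a\<in>H.Loc y. H.lift Y y a \<in> H.Inv" using H.lift y by auto
        show "\<forall>a\<in>H.Loc y. \<forall>b\<in>H.Loc y. H.lift Y y (a + b) = H.lift Y y a + H.lift Y y b"
          using H.lift_add y by auto
        show "\<forall>a\<in>H.Loc y. \<forall>b\<in>H.Loc y. H.lift Y y (a * b) = H.lift Y y a * H.lift Y y b"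
          using H.lift_mul y by auto
        show "H.lift Y y 0 = 0" using H.lift_0 y by auto
        show "0 \<in> H.Loc y" using H.Loc_0 y by auto
        show "\<forall>a\<in>H.Loc y. \<forall>b\<in>H.Loc y. a + b \<in> H.Loc y" using H.Loc_add y by auto
        show "\<forall>a\<in>H.Loc y. \<forall>b\<in>H.Loc y. a * b \<in> H.Loc y" using H.Loc_mul y by auto
        show "\<forall>a\<in>H.Loc y. \<forall>b\<in>H.Loc y. \<forall>r\<in>GG.Loc y. \<exists>r'\<in>GG.Inv.
            H.lift Y y (a * r) = H.lift Y y a * r' \<and> H.lift Y y (r * b) = r' * H.lift Y y b"
        proof (intro ballI)
          fix a b r assume a: "a \<in> H.Loc y" and b: "b \<in> H.Loc y" and r: "r \<in> GG.Loc y"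
          obtain r' where r': "r' \<in> GG.Inv" "r' * e y = r" using Rlift[OF y(3) r] by auto
          have r'H: "r' \<in> H.Inv" using r' mono1 by auto
          have "H.lift Y y (r' * e y * a) = r' * H.lift Y y a" using H.lift_cmul[OF y(2) y(1) r'H a] .
          moreover have "H.lift Y y (r' * e y * b) = r' * H.lift Y y b" using H.lift_cmul[OF y(2) y(1) r'H b] .
          ultimately show "\<exists>r'\<in>GG.Inv. H.lift Y y (a * r) = H.lift Y y a * r' \<and> H.lift Y y (r * b) = r' * H.lift Y y b"
            using r' by (metis mult.commute)
        qed
      qed
      then obtain ys where ys: "set ys \<subseteq> H.Inv \<times> H.Inv" "(\<Sum>(a, b)\<leftarrow>ys. a * b) = H.lift Y y (e y)"
        "\<And>c c'. c \<in> H.Loc y \<Longrightarrow> (\<forall>a\<in>H.Loc y. H.lift Y y (c * a) = c' * H.lift Y y a \<and>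
              H.lift Y y (a * c) = H.lift Y y a * c') \<Longrightarrow> sdiff c' ys \<in> tensor_rel GG.Inv H.Inv" by auto
      have "\<forall>c\<in>H.Inv. sdiff c ys \<in> tensor_rel GG.Inv H.Inv"
      proof
        fix c' assume c': "c' \<in> H.Inv"
        have cy: "c' * e y \<in> H.Loc y" using H.L4[OF c' y(3)] .
        show "sdiff c' ys \<in> tensor_rel GG.Inv H.Inv"
        proof (rule ys(3)[OF cy], intro ballI conjI)
          fix a assume a: "a \<in> H.Loc y"
          show "H.lift Y y (c' * e y * a) = c' * H.lift Y y a" using H.lift_cmul[OF y(2) y(1) c' a] .
          thus "H.lift Y y (a * (c' * e y)) = H.lift Y y a * c'" by (simp add: mult.commute)
        qed
      qed
      thus ?thesis using ys y_def by auto
    qed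
    define yf where "yf Y = (SOME ys. set ys \<subseteq> H.Inv \<times> H.Inv \<and> (\<Sum>(a, b)\<leftarrow>ys. a * b) = H.lift Y (rep Y) (e (rep Y)) \<and>
       (\<forall>c\<in>H.Inv. sdiff c ys \<in> tensor_rel GG.Inv H.Inv))" for Y
    have yf: "set (yf Y) \<subseteq> H.Inv \<times> H.Inv \<and> (\<Sum>(a, b)\<leftarrow>yf Y. a * b) = H.lift Y (rep Y) (e (rep Y)) \<and>
       (\<forall>c\<in>H.Inv. sdiff c (yf Y) \<in> tensor_rel GG.Inv H.Inv)" if "Y \<in> components H s t" for Y
      unfolding yf_def using P[OF that] by (rule someI_ex)
    have finC: "finite (components H s t)" using H.components_eq finobjs by simp
    obtain L where L: "distinct L" "set L = components H s t" using finite_distinct_list[OF finC] by blast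
    define zs where "zs = concat (map yf L)"
    have X: "(\<Sum>Y\<in>components H s t. H.lift Y (rep Y) (e (rep Y))) = 1"
    proof -
      define X where "X = (\<Sum>Y\<in>components H s t. H.lift Y (rep Y) (e (rep Y)))"
      have "\<forall>w\<in>objs G s. (X - 1) * e w = 0"
      proof
        fix w assume w: "w \<in> objs G s"
        define Yw where "Yw = H.comp w"
        have Yw: "Yw \<in> components H s t" "w \<in> Yw" using H.components_eq w H.comp_self Yw_def by auto
        have "X * e w = (\<Sum>Y\<in>components H s t. H.lift Y (rep Y) (e (rep Y)) * e w)"
          unfolding X_def by (simp add: sum_distrib_right)
        also have "\<dots> = (\<Sum>Y\<in>components H s t. if Y = Yw then e w else 0)"
        proof (rule sum.cong[OF refl])
          fix Y assume Yc: "Y \<in> components H s t"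
          have ey: "e (rep Y) \<in> H.Loc (rep Y)" using H.L4[OF H.Inv_1 ry(3)[OF Yc]] by simp
          show "H.lift Y (rep Y) (e (rep Y)) * e w = (if Y = Yw then e w else 0)"
          proof (cases "Y = Yw")
            case True thus ?thesis using H.lift_e[OF ry(2)[OF Yc] ry(1)[OF Yc]] Yw by simp
          next
            case False
            have "w \<notin> Y" using H.gt_comp(1)[OF ry(2)[OF Yc]] False Yw_def by auto
            thus ?thesis using H.lift[OF ry(2)[OF Yc] ry(1)[OF Yc] ey] w False by auto
          qed
        qed
        also have "\<dots> = e w" using finC Yw by (simp add: sum.delta')
        finally show "(X - 1) * e w = 0" by (simp add: left_diff_distrib)
      qed
      hence "X - 1 = 0" using H.vanish by blast
      thus ?thesis unfolding X_def by simp
    qed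
    show "separable GG.Inv H.Inv 1"
      unfolding separable_sdiff
    proof (intro exI conjI ballI)
      show "set zs \<subseteq> H.Inv \<times> H.Inv" unfolding zs_def using yf L by auto
      show "(\<Sum>(a, b)\<leftarrow>zs. a * b) = 1"
      proof -
        have "(\<Sum>(a, b)\<leftarrow>zs. a * b) = (\<Sum>Y\<leftarrow>L. (\<Sum>(a, b)\<leftarrow>yf Y. a * b))"
          unfolding zs_def sum_concat ..
        also have "\<dots> = (\<Sum>Y\<leftarrow>L. H.lift Y (rep Y) (e (rep Y)))"
          using yf L(2) by (intro arg_cong[where f=sum_list] map_cong) auto
        also have "\<dots> = 1" using sum_list_set[OF L(1), of "\<lambda>Y. H.lift Y (rep Y) (e (rep Y))"] L(2) X by simp
        finally show ?thesis .
      qed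
      fix c assume c: "c \<in> H.Inv"
      show "sdiff c zs \<in> tensor_rel GG.Inv H.Inv"
        unfolding zs_def using yf L c by (intro sdiff_concat) auto
    qed
  qed
qed


end
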